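(* Let $n\ge2$ and $\alpha^{(1)},\dots,\alpha^{(n-2)}\in\mathbb{R}$. The assignment $$h\mapsto qp,\quad x_-\mapsto-q^2/2,\quad x_+\mapsto p^2/2,\quad y_{i,-}\mapsto-\alpha^{(i)}q,\quad y_{i,+}\mapsto\alpha^{(i)}p,\quad z_{i,j}\mapsto\alpha^{(i)}\alpha^{(j)}$$ extends to a Poisson algebra homomorphism $D_n:S\mathfrak{g}_n\to C^\infty(\mathbb{R}^2)$ (one degree of freedom canonical symplectic realisation). Moreover, for $N\ge1$ and vectors $\boldsymbol\alpha^{(1)},\dots,\boldsymbol\alpha^{(n-2)}\in\mathbb{R}^N$, the assignment $$h\mapsto\mathbf q\cdot\mathbf p,\quad x_-\mapsto-\mathbf q^2/2,\quad x_+\mapsto\mathbf p^2/2,\quad y_{i,-}\mapsto-\boldsymbol\alpha^{(i)}\cdot\mathbf q,\quad y_{i,+}\mapsto\boldsymbol\alpha^{(i)}\cdot\mathbf p,\quad z_{i,j}\mapsto\boldsymbol\alpha^{(i)}\cdot\boldsymbol\alpha^{(j)}$$ extends to a Poisson algebra homomorphism $S\mathfrak{g}_n\to C^\infty(\mathbb{R}^{2N})$ (the $N$ degrees of freedom canonical realisation obtained as $D_n^{\otimes N}$ composed with the $N$-th primitive coproduct, the $i$-th site using the constants given by the $i$-th components of the $\boldsymbol\alpha^{(j)}$).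
   Context: For $n\ge2$, $\mathfrak{g}_n$ is the real Lie algebra with basis $h,x_-,x_+$, $y_{i,\pm}$ ($1\le i\le n-2$), $z_{i,j}$ ($1\le i\le j\le n-2$), whose nonzero brackets (up to antisymmetry) are $[x_+,x_-]=h$, $[h,x_\pm]=\pm2x_\pm$, $[h,y_{i,\pm}]=\pm y_{i,\pm}$, $[x_-,y_{i,+}]=y_{i,-}$, $[x_+,y_{i,-}]=y_{i,+}$, $[y_{i,+},y_{j,-}]=z_{\min(i,j),\max(i,j)}$; all other brackets vanish. $S\mathfrak{g}_n$ is the polynomial algebra in the basis elements with the Lie–Poisson bracket $\{f,g\}=\sum_{i,j,k}c_{ij}^kx_k\,\partial_{x_i}f\,\partial_{x_j}g$ extending the Lie bracket. $C^\infty(\mathbb{R}^{2N})$ with Darboux coordinates $\mathbf q=(q_1,\dots,q_N)$, $\mathbf p=(p_1,\dots,p_N)$ carries the canonical bracket $\{f,g\}=\sum_k(\partial_{q_k}f\,\partial_{p_k}g-\partial_{q_k}g\,\partial_{p_k}f)$; for $N=1$ write $(q,p)$. The primitive coproduct is $\Delta(x)=x\otimes1+1\otimes x$ on generators. *)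

theory Defs
  imports "HOL-Analysis.Analysis"
begin

datatype gen = H | Xm | Xp | Ym nat | Yp nat | Z nat nat

definition basis :: "nat \<Rightarrow> gen set" where
  "basis n = {H, Xm, Xp}
     \<union> {Ym i | i. 1 \<le> i \<and> i \<le> n - 2}
     \<union> {Yp i | i. 1 \<le> i \<and> i \<le> n - 2}
     \<union> {Z i j | i j. 1 \<le> i \<and> i \<le> j \<and> j \<le> n - 2}"

definition unitv :: "gen \<Rightarrow> gen \<Rightarrow> real" where
  "unitv c = (\<lambda>d. if d = c then 1 else 0)"

text \<open>Lie bracket of basis elements, as coefficient vector: lie a b c = c_{ab}^c.\<close>
fun lie :: "gen \<Rightarrow> gen \<Rightarrow> gen \<Rightarrow> real" where
  "lie Xp Xm = unitv H"
| "lie Xm Xp = (\<lambda>d. - unitv H d)"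
| "lie H Xp = (\<lambda>d. 2 * unitv Xp d)"
| "lie Xp H = (\<lambda>d. - 2 * unitv Xp d)"
| "lie H Xm = (\<lambda>d. - 2 * unitv Xm d)"
| "lie Xm H = (\<lambda>d. 2 * unitv Xm d)"
| "lie H (Yp i) = unitv (Yp i)"
| "lie (Yp i) H = (\<lambda>d. - unitv (Yp i) d)"
| "lie H (Ym i) = (\<lambda>d. - unitv (Ym i) d)"
| "lie (Ym i) H = unitv (Ym i)"
| "lie Xm (Yp i) = unitv (Ym i)"
| "lie (Yp i) Xm = (\<lambda>d. - unitv (Ym i) d)"
| "lie Xp (Ym i) = unitv (Yp i)"
| "lie (Ym i) Xp = (\<lambda>d. - unitv (Yp i) d)"
| "lie (Yp i) (Ym j) = unitv (Z (min i j) (max i j))"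
| "lie (Ym j) (Yp i) = (\<lambda>d. - unitv (Z (min i j) (max i j)) d)"
| "lie _ _ = (\<lambda>d. 0)"

text \<open>S g_n (over the reals) is realised as the algebra of polynomial functions on the dual
  g_n^*, a point of which is given by its values xi b on the basis elements b.\<close>
inductive_set polyfun :: "nat \<Rightarrow> ((gen \<Rightarrow> real) \<Rightarrow> real) set" for n :: nat where
  const: "(\<lambda>_. c) \<in> polyfun n"
| coord: "b \<in> basis n \<Longrightarrow> (\<lambda>\<xi>. \<xi> b) \<in> polyfun n"
| add: "f \<in> polyfun n \<Longrightarrow> g \<in> polyfun n \<Longrightarrow> (\<lambda>\<xi>. f \<xi> + g \<xi>) \<in> polyfun n"
| mult: "f \<in> polyfun n \<Longrightarrow> g \<in> polyfun n \<Longrightarrow> (\<lambda>\<xi>. f \<xi> * g \<xi>) \<in> polyfun n"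

definition gpartial :: "gen \<Rightarrow> ((gen \<Rightarrow> real) \<Rightarrow> real) \<Rightarrow> (gen \<Rightarrow> real) \<Rightarrow> real" where
  "gpartial b f \<xi> = deriv (\<lambda>t. f (\<xi>(b := t))) (\<xi> b)"

definition LP_bracket :: "nat \<Rightarrow> ((gen \<Rightarrow> real) \<Rightarrow> real) \<Rightarrow> ((gen \<Rightarrow> real) \<Rightarrow> real)
    \<Rightarrow> (gen \<Rightarrow> real) \<Rightarrow> real" where
  "LP_bracket n f g \<xi> =
     (\<Sum>a\<in>basis n. \<Sum>b\<in>basis n. \<Sum>c\<in>basis n.
        lie a b c * \<xi> c * gpartial a f \<xi> * gpartial b g \<xi>)"

fun diff_k :: "nat \<Rightarrow> ('a::real_normed_vector \<Rightarrow> real) \<Rightarrow> bool" where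
  "diff_k 0 f = True"
| "diff_k (Suc k) f = ((\<forall>x. f differentiable (at x)) \<and>
      (\<forall>v. diff_k k (\<lambda>x. frechet_derivative f (at x) v)))"

definition C_inf :: "('a::real_normed_vector \<Rightarrow> real) \<Rightarrow> bool" where
  "C_inf f \<longleftrightarrow> (\<forall>k. diff_k k f)"

definition can_bracket1 :: "(real \<times> real \<Rightarrow> real) \<Rightarrow> (real \<times> real \<Rightarrow> real) \<Rightarrow> real \<times> real \<Rightarrow> real" where
  "can_bracket1 f g = (\<lambda>(q, p).
      deriv (\<lambda>t. f (t, p)) q * deriv (\<lambda>t. g (q, t)) p
    - deriv (\<lambda>t. g (t, p)) q * deriv (\<lambda>t. f (q, t)) p)"

definition vupd :: "real ^ 'N \<Rightarrow> 'N \<Rightarrow> real \<Rightarrow> real ^ 'N" where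
  "vupd v k t = (\<chi> j. if j = k then t else v $ j)"

definition can_bracketN :: "((real ^ 'N) \<times> (real ^ 'N) \<Rightarrow> real) \<Rightarrow> ((real ^ 'N) \<times> (real ^ 'N) \<Rightarrow> real)
    \<Rightarrow> (real ^ 'N) \<times> (real ^ 'N) \<Rightarrow> real" where
  "can_bracketN f g = (\<lambda>(q, p). \<Sum>k\<in>UNIV.
      deriv (\<lambda>t. f (vupd q k t, p)) (q $ k) * deriv (\<lambda>t. g (q, vupd p k t)) (p $ k)
    - deriv (\<lambda>t. g (vupd q k t, p)) (q $ k) * deriv (\<lambda>t. f (q, vupd p k t)) (p $ k))"

definition LP_poisson_hom :: "nat \<Rightarrow> (('b::euclidean_space \<Rightarrow> real) \<Rightarrow> ('b \<Rightarrow> real) \<Rightarrow> 'b \<Rightarrow> real)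
    \<Rightarrow> (gen \<Rightarrow> 'b \<Rightarrow> real) \<Rightarrow> (((gen \<Rightarrow> real) \<Rightarrow> real) \<Rightarrow> 'b \<Rightarrow> real) \<Rightarrow> bool" where
  "LP_poisson_hom n br \<phi> D \<longleftrightarrow>
     (\<forall>f\<in>polyfun n. C_inf (D f)) \<and>
     (\<forall>c. D (\<lambda>_. c) = (\<lambda>_. c)) \<and>
     (\<forall>f\<in>polyfun n. \<forall>g\<in>polyfun n. D (\<lambda>\<xi>. f \<xi> + g \<xi>) = (\<lambda>x. D f x + D g x)) \<and>
     (\<forall>f\<in>polyfun n. \<forall>g\<in>polyfun n. D (\<lambda>\<xi>. f \<xi> * g \<xi>) = (\<lambda>x. D f x * D g x)) \<and>
     (\<forall>b\<in>basis n. D (\<lambda>\<xi>. \<xi> b) = \<phi> b) \<and>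
     (\<forall>f\<in>polyfun n. \<forall>g\<in>polyfun n. D (LP_bracket n f g) = br (D f) (D g))"

fun real1 :: "(nat \<Rightarrow> real) \<Rightarrow> gen \<Rightarrow> real \<times> real \<Rightarrow> real" where
  "real1 \<alpha> H = (\<lambda>(q, p). q * p)"
| "real1 \<alpha> Xm = (\<lambda>(q, p). - (q ^ 2) / 2)"
| "real1 \<alpha> Xp = (\<lambda>(q, p). p ^ 2 / 2)"
| "real1 \<alpha> (Ym i) = (\<lambda>(q, p). - (\<alpha> i * q))"
| "real1 \<alpha> (Yp i) = (\<lambda>(q, p). \<alpha> i * p)"
| "real1 \<alpha> (Z i j) = (\<lambda>_. \<alpha> i * \<alpha> j)"

fun realN :: "(nat \<Rightarrow> real ^ 'N) \<Rightarrow> gen \<Rightarrow> (real ^ 'N) \<times> (real ^ 'N) \<Rightarrow> real" where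
  "realN \<alpha> H = (\<lambda>(q, p). q \<bullet> p)"
| "realN \<alpha> Xm = (\<lambda>(q, p). - (q \<bullet> q) / 2)"
| "realN \<alpha> Xp = (\<lambda>(q, p). (p \<bullet> p) / 2)"
| "realN \<alpha> (Ym i) = (\<lambda>(q, p). - (\<alpha> i \<bullet> q))"
| "realN \<alpha> (Yp i) = (\<lambda>(q, p). \<alpha> i \<bullet> p)"
| "realN \<alpha> (Z i j) = (\<lambda>_. \<alpha> i \<bullet> \<alpha> j)"

end

theory Submission
  imports Defs
begin

lemma diff_k_const: "diff_k k (\<lambda>x::'a::real_normed_vector. c)"
  by (induct k arbitrary: c) auto

lemma diff_k_mono: "diff_k (Suc k) (f::'a::real_normed_vector \<Rightarrow> real) \<Longrightarrow> diff_k k f"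
  by (induct k arbitrary: f) auto

lemma diff_k_add_mult:
  fixes f g :: "'a::real_normed_vector \<Rightarrow> real"
  shows "diff_k k f \<Longrightarrow> diff_k k g \<Longrightarrow> diff_k k (\<lambda>x. f x + g x) \<and> diff_k k (\<lambda>x. f x * g x)"
proof (induct k arbitrary: f g)
  case 0 then show ?case by simp
next
  case (Suc k)
  have df: "\<And>x. (f has_derivative frechet_derivative f (at x)) (at x)"
    using Suc.prems by (simp add: frechet_derivative_works[symmetric])
  have dg: "\<And>x. (g has_derivative frechet_derivative g (at x)) (at x)"
    using Suc.prems by (simp add: frechet_derivative_works[symmetric])
  have fk: "diff_k k f" and gk: "diff_k k g" using Suc.prems diff_k_mono by blast+
  have Df: "diff_k k (\<lambda>x. frechet_derivative f (at x) v)" for v using Suc.prems by simp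
  have Dg: "diff_k k (\<lambda>x. frechet_derivative g (at x) v)" for v using Suc.prems by simp
  have ea: "(\<lambda>x. frechet_derivative (\<lambda>x. f x + g x) (at x) v) =
      (\<lambda>x. frechet_derivative f (at x) v + frechet_derivative g (at x) v)" for v
  proof
    fix x
    have "((\<lambda>x. f x + g x) has_derivative (\<lambda>h. frechet_derivative f (at x) h + frechet_derivative g (at x) h)) (at x)"
      using df dg by (intro has_derivative_add)
    from frechet_derivative_at[OF this] show "frechet_derivative (\<lambda>x. f x + g x) (at x) v =
      frechet_derivative f (at x) v + frechet_derivative g (at x) v" by metis
  qed
  have em: "(\<lambda>x. frechet_derivative (\<lambda>x. f x * g x) (at x) v) =
      (\<lambda>x. f x * frechet_derivative g (at x) v + frechet_derivative f (at x) v * g x)" for v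
  proof
    fix x
    have "((\<lambda>x. f x * g x) has_derivative (\<lambda>h. f x * frechet_derivative g (at x) h + frechet_derivative f (at x) h * g x)) (at x)"
      using df dg by (intro has_derivative_mult)
    from frechet_derivative_at[OF this] show "frechet_derivative (\<lambda>x. f x * g x) (at x) v =
      f x * frechet_derivative g (at x) v + frechet_derivative f (at x) v * g x" by metis
  qed
  have da: "(\<lambda>x. f x + g x) differentiable at x" for x using df dg differentiable_def
    by (metis differentiable_add)
  have dm: "(\<lambda>x. f x * g x) differentiable at x" for x using df dg differentiable_def
    by (metis differentiable_mult)
  have A: "diff_k k (\<lambda>x. frechet_derivative (\<lambda>x. f x + g x) (at x) v)" for v
    unfolding ea using Suc.hyps[OF Df Dg] by blast
  have M: "diff_k k (\<lambda>x. frechet_derivative (\<lambda>x. f x * g x) (at x) v)" for v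
  proof -
    have 1: "diff_k k (\<lambda>x. f x * frechet_derivative g (at x) v)" using Suc.hyps[OF fk Dg] by blast
    have 2: "diff_k k (\<lambda>x. frechet_derivative f (at x) v * g x)" using Suc.hyps[OF Df gk] by blast
    show ?thesis unfolding em using Suc.hyps[OF 1 2] by blast
  qed
  show ?case using A M da dm by simp
qed

lemma diff_k_linear: "bounded_linear (l::'a::real_normed_vector \<Rightarrow> real) \<Longrightarrow> diff_k k l"
proof (cases k)
  case 0 then show ?thesis by simp
next
  case (Suc m)
  assume l: "bounded_linear l"
  have "frechet_derivative l (at x) = l" for x
    using frechet_derivative_at[OF bounded_linear_imp_has_derivative[OF l]] by simp
  then show ?thesis using Suc l by (simp add: bounded_linear_imp_differentiable diff_k_const)
qed

lemma C_inf_const: "C_inf (\<lambda>x::'a::real_normed_vector. c)"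
  by (simp add: C_inf_def diff_k_const)
lemma C_inf_add: "C_inf (f::'a::real_normed_vector\<Rightarrow>real) \<Longrightarrow> C_inf g \<Longrightarrow> C_inf (\<lambda>x. f x + g x)"
  by (simp add: C_inf_def diff_k_add_mult)
lemma C_inf_mult: "C_inf (f::'a::real_normed_vector\<Rightarrow>real) \<Longrightarrow> C_inf g \<Longrightarrow> C_inf (\<lambda>x. f x * g x)"
  by (simp add: C_inf_def diff_k_add_mult)
lemma C_inf_linear: "bounded_linear (l::'a::real_normed_vector \<Rightarrow> real) \<Longrightarrow> C_inf l"
  by (simp add: C_inf_def diff_k_linear)
lemma C_inf_sum: "finite K \<Longrightarrow> (\<And>k. k \<in> K \<Longrightarrow> C_inf (f k::'a::real_normed_vector\<Rightarrow>real)) \<Longrightarrow> C_inf (\<lambda>x. \<Sum>k\<in>K. f k x)"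
  by (induct K rule: finite_induct) (auto intro: C_inf_const C_inf_add)



lemma finite_basis: "finite (basis n)"
proof -
  have "basis n \<subseteq> {H, Xm, Xp} \<union> Ym ` {1..n-2} \<union> Yp ` {1..n-2} \<union> (\<lambda>(i,j). Z i j) ` ({1..n-2} \<times> {1..n-2})"
    unfolding basis_def by auto
  then show ?thesis by (rule finite_subset) auto
qed

definition chainP :: "nat \<Rightarrow> ((gen \<Rightarrow> real) \<Rightarrow> real) \<Rightarrow> bool" where
  "chainP n f \<longleftrightarrow> (\<forall>\<gamma> t0 \<gamma>'. (\<forall>b\<in>basis n. ((\<lambda>t. \<gamma> t b) has_real_derivative \<gamma>' b) (at t0)) \<longrightarrow>
     ((\<lambda>t. f (\<gamma> t)) has_real_derivative (\<Sum>a\<in>basis n. gpartial a f (\<gamma> t0) * \<gamma>' a)) (at t0))"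

lemma gp_DERIV:
  assumes "chainP n f"
  shows "((\<lambda>t. f (\<xi>(a:=t))) has_real_derivative gpartial a f \<xi>) (at (\<xi> a))"
proof -
  have "\<forall>b\<in>basis n. ((\<lambda>t. (\<xi>(a:=t)) b) has_real_derivative (if b = a then 1 else 0)) (at (\<xi> a))"
  proof
    fix b show "((\<lambda>t. (\<xi>(a:=t)) b) has_real_derivative (if b = a then 1 else 0)) (at (\<xi> a))"
      by (cases "b = a") (auto intro!: derivative_eq_intros)
  qed
  with assms have "((\<lambda>t. f (\<xi>(a:=t))) has_real_derivative
      (\<Sum>b\<in>basis n. gpartial b f ((\<xi>(a:=\<xi> a))) * (if b = a then 1 else 0))) (at (\<xi> a))"
    using assms unfolding chainP_def by (elim allE[where x="\<lambda>t. \<xi>(a:=t)"] allE[where x="\<xi> a"] allE[where x="\<lambda>b. if b = a then 1 else 0"]) simp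
  then have "(\<lambda>t. f (\<xi>(a:=t))) differentiable at (\<xi> a)"
    using real_differentiable_def by blast
  then show ?thesis unfolding gpartial_def by (simp add: DERIV_deriv_iff_real_differentiable)
qed

lemma gp_eq: "chainP n f \<Longrightarrow> deriv (\<lambda>t. f (\<xi>(a:=t))) (\<xi> a) = gpartial a f \<xi>"
  by (simp add: gpartial_def)

lemma chain: "f \<in> polyfun n \<Longrightarrow> chainP n f"
proof (induct f rule: polyfun.induct)
  case (const c)
  have "gpartial a (\<lambda>_. c) \<xi> = 0" for a \<xi> by (simp add: gpartial_def)
  then show ?case unfolding chainP_def by (auto intro!: derivative_eq_intros)
next
  case (coord b)
  have gp: "gpartial a (\<lambda>\<xi>. \<xi> b) \<xi> = (if a = b then 1 else 0)" for a \<xi>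
    by (cases "a = b") (auto simp: gpartial_def)
  have gp2: "gpartial a (\<lambda>\<xi>. \<xi> b) \<xi> * x = (if a = b then x else 0)" for a \<xi> x
    by (simp add: gp)
  show ?case unfolding chainP_def
  proof (intro allI impI)
    fix \<gamma> t0 \<gamma>' assume h: "\<forall>b\<in>basis n. ((\<lambda>t. \<gamma> t b) has_real_derivative \<gamma>' b) (at t0)"
    have "(\<Sum>a\<in>basis n. gpartial a (\<lambda>\<xi>. \<xi> b) (\<gamma> t0) * \<gamma>' a) = \<gamma>' b"
      using coord finite_basis by (simp add: gp2)
    then show "((\<lambda>t. \<gamma> t b) has_real_derivative (\<Sum>a\<in>basis n. gpartial a (\<lambda>\<xi>. \<xi> b) (\<gamma> t0) * \<gamma>' a)) (at t0)"
      using h coord by simp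
  qed
next
  case (add f g)
  have gp: "gpartial a (\<lambda>\<xi>. f \<xi> + g \<xi>) \<xi> = gpartial a f \<xi> + gpartial a g \<xi>" for a \<xi>
    using DERIV_add[OF gp_DERIV[OF add(2), of \<xi> a] gp_DERIV[OF add(4), of \<xi> a]]
    unfolding gpartial_def by (metis DERIV_imp_deriv)
  show ?case unfolding chainP_def
  proof (intro allI impI)
    fix \<gamma> t0 \<gamma>' assume h: "\<forall>b\<in>basis n. ((\<lambda>t. \<gamma> t b) has_real_derivative \<gamma>' b) (at t0)"
    have "((\<lambda>t. f (\<gamma> t) + g (\<gamma> t)) has_real_derivative
       (\<Sum>a\<in>basis n. gpartial a f (\<gamma> t0) * \<gamma>' a) + (\<Sum>a\<in>basis n. gpartial a g (\<gamma> t0) * \<gamma>' a)) (at t0)"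
      using add(2,4) h unfolding chainP_def by (intro DERIV_add) blast+
    then show "((\<lambda>t. f (\<gamma> t) + g (\<gamma> t)) has_real_derivative
       (\<Sum>a\<in>basis n. gpartial a (\<lambda>\<xi>. f \<xi> + g \<xi>) (\<gamma> t0) * \<gamma>' a)) (at t0)"
      by (simp add: gp distrib_right sum.distrib)
  qed
next
  case (mult f g)
  have gp: "gpartial a (\<lambda>\<xi>. f \<xi> * g \<xi>) \<xi> = gpartial a f \<xi> * g \<xi> + f \<xi> * gpartial a g \<xi>" for a \<xi>
  proof -
    have "((\<lambda>t. f (\<xi>(a:=t)) * g (\<xi>(a:=t))) has_real_derivative gpartial a f \<xi> * g (\<xi>(a:=\<xi> a)) + f (\<xi>(a:=\<xi> a)) * gpartial a g \<xi>) (at (\<xi> a))"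
      using DERIV_mult[OF gp_DERIV[OF mult(2), of \<xi> a] gp_DERIV[OF mult(4), of \<xi> a]] by (simp only: mult.commute)
    then have "((\<lambda>t. f (\<xi>(a:=t)) * g (\<xi>(a:=t))) has_real_derivative gpartial a f \<xi> * g \<xi> + f \<xi> * gpartial a g \<xi>) (at (\<xi> a))"
      by (simp only: fun_upd_triv)
    then show ?thesis unfolding gpartial_def[of a "\<lambda>\<xi>. f \<xi> * g \<xi>"] by (rule DERIV_imp_deriv)
  qed
  show ?case unfolding chainP_def
  proof (intro allI impI)
    fix \<gamma> t0 \<gamma>' assume h: "\<forall>b\<in>basis n. ((\<lambda>t. \<gamma> t b) has_real_derivative \<gamma>' b) (at t0)"
    have "((\<lambda>t. f (\<gamma> t) * g (\<gamma> t)) has_real_derivative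
       (\<Sum>a\<in>basis n. gpartial a f (\<gamma> t0) * \<gamma>' a) * g (\<gamma> t0) + (\<Sum>a\<in>basis n. gpartial a g (\<gamma> t0) * \<gamma>' a) * f (\<gamma> t0)) (at t0)"
      using mult(2,4) h unfolding chainP_def by (intro DERIV_mult) blast+
    then show "((\<lambda>t. f (\<gamma> t) * g (\<gamma> t)) has_real_derivative
       (\<Sum>a\<in>basis n. gpartial a (\<lambda>\<xi>. f \<xi> * g \<xi>) (\<gamma> t0) * \<gamma>' a)) (at t0)"
      by (simp add: gp algebra_simps sum.distrib sum_distrib_left sum_distrib_right)
  qed
qed



lemma if01_mult: "(if P then 1 else 0) * (y::real) = (if P then y else 0)"
  "(y::real) * (if P then 1 else 0) = (if P then y else 0)" by auto

lemma sum_unitv: "d \<in> basis n \<Longrightarrow> (\<Sum>c\<in>basis n. unitv d c * g c) = g d"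
  using finite_basis by (simp add: unitv_def if01_mult eq_commute[of _ d])

lemma Zmem: "Yp i \<in> basis n \<Longrightarrow> Ym j \<in> basis n \<Longrightarrow> Z (min i j) (max i j) \<in> basis n"
  by (auto simp: basis_def)

lemma lie_sum:
  assumes "a \<in> basis n" "b \<in> basis n"
  shows "(\<Sum>c\<in>basis n. lie a b c * g c) =
    (case (a, b) of
       (Xp, Xm) \<Rightarrow> g H | (Xm, Xp) \<Rightarrow> - g H
     | (H, Xp) \<Rightarrow> 2 * g Xp | (Xp, H) \<Rightarrow> - 2 * g Xp
     | (H, Xm) \<Rightarrow> - 2 * g Xm | (Xm, H) \<Rightarrow> 2 * g Xm
     | (H, Yp i) \<Rightarrow> g (Yp i) | (Yp i, H) \<Rightarrow> - g (Yp i)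
     | (H, Ym i) \<Rightarrow> - g (Ym i) | (Ym i, H) \<Rightarrow> g (Ym i)
     | (Xm, Yp i) \<Rightarrow> g (Ym i) | (Yp i, Xm) \<Rightarrow> - g (Ym i)
     | (Xp, Ym i) \<Rightarrow> g (Yp i) | (Ym i, Xp) \<Rightarrow> - g (Yp i)
     | (Yp i, Ym j) \<Rightarrow> g (Z (min i j) (max i j))
     | (Ym j, Yp i) \<Rightarrow> - g (Z (min i j) (max i j))
     | _ \<Rightarrow> 0)"
proof -
  have m: "H \<in> basis n" "Xm \<in> basis n" "Xp \<in> basis n" by (auto simp: basis_def)
  have ym: "Ym i \<in> basis n \<Longrightarrow> Yp i \<in> basis n" "Yp i \<in> basis n \<Longrightarrow> Ym i \<in> basis n" for i
    by (auto simp: basis_def)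
  show ?thesis using assms
    by (cases a; cases b) (auto simp: sum_unitv m ym Zmem sum_negf mult.assoc sum_distrib_left[symmetric])
qed



fun dq1 :: "(nat \<Rightarrow> real) \<Rightarrow> gen \<Rightarrow> real \<times> real \<Rightarrow> real" where
  "dq1 \<alpha> H (q, p) = p"
| "dq1 \<alpha> Xm (q, p) = - q"
| "dq1 \<alpha> Xp (q, p) = 0"
| "dq1 \<alpha> (Ym i) (q, p) = - \<alpha> i"
| "dq1 \<alpha> (Yp i) (q, p) = 0"
| "dq1 \<alpha> (Z i j) (q, p) = 0"

fun dp1 :: "(nat \<Rightarrow> real) \<Rightarrow> gen \<Rightarrow> real \<times> real \<Rightarrow> real" where
  "dp1 \<alpha> H (q, p) = q"
| "dp1 \<alpha> Xm (q, p) = 0"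
| "dp1 \<alpha> Xp (q, p) = p"
| "dp1 \<alpha> (Ym i) (q, p) = 0"
| "dp1 \<alpha> (Yp i) (q, p) = \<alpha> i"
| "dp1 \<alpha> (Z i j) (q, p) = 0"

lemma dq1_D: "((\<lambda>t. real1 \<alpha> b (t, p)) has_real_derivative dq1 \<alpha> b (q, p)) (at q)"
  by (cases b) (auto intro!: derivative_eq_intros)

lemma dp1_D: "((\<lambda>t. real1 \<alpha> b (q, t)) has_real_derivative dp1 \<alpha> b (q, p)) (at p)"
  by (cases b) (auto intro!: derivative_eq_intros)

lemma struct1:
  assumes "a \<in> basis n" "b \<in> basis n"
  shows "dq1 \<alpha> a (q,p) * dp1 \<alpha> b (q,p) - dq1 \<alpha> b (q,p) * dp1 \<alpha> a (q,p) = (\<Sum>c\<in>basis n. lie a b c * real1 \<alpha> c (q,p))"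
  unfolding lie_sum[OF assms]
  by (cases a; cases b) (auto simp: power2_eq_square algebra_simps min_def max_def)



lemma bil1:
  fixes A B u v :: "'a \<Rightarrow> real"
  shows "(\<Sum>a\<in>S. A a * u a) * (\<Sum>b\<in>S. B b * v b) - (\<Sum>b\<in>S. B b * u b) * (\<Sum>a\<in>S. A a * v a)
     = (\<Sum>a\<in>S. \<Sum>b\<in>S. A a * B b * (u a * v b - u b * v a))"
proof -
  have 1: "(\<Sum>a\<in>S. A a * u a) * (\<Sum>b\<in>S. B b * v b) = (\<Sum>a\<in>S. \<Sum>b\<in>S. A a * B b * (u a * v b))"
    by (simp add: sum_product algebra_simps)
  have 2: "(\<Sum>b\<in>S. B b * u b) * (\<Sum>a\<in>S. A a * v a) = (\<Sum>a\<in>S. \<Sum>b\<in>S. A a * B b * (u b * v a))"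
    by (simp add: sum_product algebra_simps)
  show ?thesis unfolding 1 2 by (simp add: sum_subtractf[symmetric] right_diff_distrib)
qed

lemma bilN:
  fixes A B :: "'a \<Rightarrow> real" and u v :: "'k \<Rightarrow> 'a \<Rightarrow> real"
  shows "(\<Sum>k\<in>K. (\<Sum>a\<in>S. A a * u k a) * (\<Sum>b\<in>S. B b * v k b) - (\<Sum>b\<in>S. B b * u k b) * (\<Sum>a\<in>S. A a * v k a))
     = (\<Sum>a\<in>S. \<Sum>b\<in>S. A a * B b * (\<Sum>k\<in>K. u k a * v k b - u k b * v k a))"
proof -
  have "(\<Sum>k\<in>K. (\<Sum>a\<in>S. A a * u k a) * (\<Sum>b\<in>S. B b * v k b) - (\<Sum>b\<in>S. B b * u k b) * (\<Sum>a\<in>S. A a * v k a))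
      = (\<Sum>k\<in>K. \<Sum>a\<in>S. \<Sum>b\<in>S. A a * B b * (u k a * v k b - u k b * v k a))"
    by (simp add: bil1)
  also have "\<dots> = (\<Sum>a\<in>S. \<Sum>k\<in>K. \<Sum>b\<in>S. A a * B b * (u k a * v k b - u k b * v k a))"
    by (rule sum.swap)
  also have "\<dots> = (\<Sum>a\<in>S. \<Sum>b\<in>S. \<Sum>k\<in>K. A a * B b * (u k a * v k b - u k b * v k a))"
    by (simp add: sum.swap[of _ K])
  also have "\<dots> = (\<Sum>a\<in>S. \<Sum>b\<in>S. A a * B b * (\<Sum>k\<in>K. u k a * v k b - u k b * v k a))"
    by (simp add: sum_distrib_left)
  finally show ?thesis .
qed

definition D1 :: "(nat \<Rightarrow> real) \<Rightarrow> ((gen \<Rightarrow> real) \<Rightarrow> real) \<Rightarrow> real \<times> real \<Rightarrow> real" where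
  "D1 \<alpha> f = (\<lambda>x. f (\<lambda>b. real1 \<alpha> b x))"

lemma C_inf_real1: "C_inf (real1 \<alpha> b)"
proof -
  have f: "C_inf (\<lambda>x::real\<times>real. fst x)" "C_inf (\<lambda>x::real\<times>real. snd x)"
    by (auto intro!: C_inf_linear bounded_linear_fst bounded_linear_snd)
  show ?thesis
  proof (cases b)
    case H
    have "real1 \<alpha> b = (\<lambda>x. fst x * snd x)" using H by (auto simp: fun_eq_iff)
    then show ?thesis using f by (simp add: C_inf_mult)
  next
    case Xm
    have "real1 \<alpha> b = (\<lambda>x. (-1/2) * (fst x * fst x))" using Xm by (auto simp: fun_eq_iff power2_eq_square)
    then show ?thesis using C_inf_mult[OF C_inf_const C_inf_mult[OF f(1) f(1)], of "-1/2"] by simp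
  next
    case Xp
    have "real1 \<alpha> b = (\<lambda>x. (1/2) * (snd x * snd x))" using Xp by (auto simp: fun_eq_iff power2_eq_square)
    then show ?thesis using C_inf_mult[OF C_inf_const C_inf_mult[OF f(2) f(2)], of "1/2"] by simp
  next
    case (Ym i)
    have "real1 \<alpha> b = (\<lambda>x. (- \<alpha> i) * fst x)" using Ym by (auto simp: fun_eq_iff)
    then show ?thesis using C_inf_mult[OF C_inf_const f(1), of "- \<alpha> i"] by simp
  next
    case (Yp i)
    have "real1 \<alpha> b = (\<lambda>x. \<alpha> i * snd x)" using Yp by (auto simp: fun_eq_iff)
    then show ?thesis using f by (simp add: C_inf_mult C_inf_const)
  next
    case (Z i j)
    then show ?thesis by (simp add: C_inf_const)
  qed
qed

lemma D1_Cinf: "f \<in> polyfun n \<Longrightarrow> C_inf (D1 \<alpha> f)"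
proof (induct f rule: polyfun.induct)
  case (const c) then show ?case by (simp add: D1_def C_inf_const)
next
  case (coord b)
  have "D1 \<alpha> (\<lambda>\<xi>. \<xi> b) = real1 \<alpha> b" by (simp add: D1_def fun_eq_iff)
  then show ?case by (simp add: C_inf_real1)
next
  case (add f g) then show ?case by (simp add: D1_def C_inf_add)
next
  case (mult f g) then show ?case by (simp add: D1_def C_inf_mult)
qed

lemma D1_dq: "f \<in> polyfun n \<Longrightarrow> deriv (\<lambda>t. D1 \<alpha> f (t, p)) q = (\<Sum>a\<in>basis n. gpartial a f (\<lambda>b. real1 \<alpha> b (q,p)) * dq1 \<alpha> a (q,p))"
proof -
  assume f: "f \<in> polyfun n"
  have "((\<lambda>t. f (\<lambda>b. real1 \<alpha> b (t, p))) has_real_derivative (\<Sum>a\<in>basis n. gpartial a f (\<lambda>b. real1 \<alpha> b (q,p)) * dq1 \<alpha> a (q,p))) (at q)"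
    using chain[OF f] dq1_D unfolding chainP_def
    by (elim allE[where x="\<lambda>t b. real1 \<alpha> b (t, p)"] allE[where x="q"] allE[where x="\<lambda>b. dq1 \<alpha> b (q,p)"]) auto
  then show ?thesis unfolding D1_def by (rule DERIV_imp_deriv)
qed

lemma D1_dp: "f \<in> polyfun n \<Longrightarrow> deriv (\<lambda>t. D1 \<alpha> f (q, t)) p = (\<Sum>a\<in>basis n. gpartial a f (\<lambda>b. real1 \<alpha> b (q,p)) * dp1 \<alpha> a (q,p))"
proof -
  assume f: "f \<in> polyfun n"
  have "((\<lambda>t. f (\<lambda>b. real1 \<alpha> b (q, t))) has_real_derivative (\<Sum>a\<in>basis n. gpartial a f (\<lambda>b. real1 \<alpha> b (q,p)) * dp1 \<alpha> a (q,p))) (at p)"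
    using chain[OF f] dp1_D unfolding chainP_def
    by (elim allE[where x="\<lambda>t b. real1 \<alpha> b (q, t)"] allE[where x="p"] allE[where x="\<lambda>b. dp1 \<alpha> b (q,p)"]) auto
  then show ?thesis unfolding D1_def by (rule DERIV_imp_deriv)
qed

lemma part1: "LP_poisson_hom n can_bracket1 (real1 \<alpha>) (D1 \<alpha>)"
  unfolding LP_poisson_hom_def
proof (intro conjI ballI allI)
  fix f g assume f: "f \<in> polyfun n" and g: "g \<in> polyfun n"
  show "D1 \<alpha> (LP_bracket n f g) = can_bracket1 (D1 \<alpha> f) (D1 \<alpha> g)"
  proof
    fix x :: "real \<times> real"
    obtain q p where x: "x = (q, p)" by (cases x)
    let ?\<xi> = "\<lambda>b. real1 \<alpha> b (q,p)"
    have "can_bracket1 (D1 \<alpha> f) (D1 \<alpha> g) x =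
      (\<Sum>a\<in>basis n. \<Sum>b\<in>basis n. gpartial a f ?\<xi> * gpartial b g ?\<xi> *
         (dq1 \<alpha> a (q,p) * dp1 \<alpha> b (q,p) - dq1 \<alpha> b (q,p) * dp1 \<alpha> a (q,p)))"
      unfolding x can_bracket1_def using f g by (simp add: D1_dq D1_dp bil1)
    also have "\<dots> = (\<Sum>a\<in>basis n. \<Sum>b\<in>basis n. \<Sum>c\<in>basis n.
        lie a b c * ?\<xi> c * gpartial a f ?\<xi> * gpartial b g ?\<xi>)"
    proof (intro sum.cong refl)
      fix a b assume a: "a \<in> basis n" and b: "b \<in> basis n"
      show "gpartial a f ?\<xi> * gpartial b g ?\<xi> *
         (dq1 \<alpha> a (q,p) * dp1 \<alpha> b (q,p) - dq1 \<alpha> b (q,p) * dp1 \<alpha> a (q,p)) =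
        (\<Sum>c\<in>basis n. lie a b c * ?\<xi> c * gpartial a f ?\<xi> * gpartial b g ?\<xi>)"
        unfolding struct1[OF a b] by (simp add: sum_distrib_left mult_ac)
    qed
    also have "\<dots> = D1 \<alpha> (LP_bracket n f g) x"
      by (simp add: x D1_def LP_bracket_def)
    finally show "D1 \<alpha> (LP_bracket n f g) x = can_bracket1 (D1 \<alpha> f) (D1 \<alpha> g) x" by simp
  qed
qed (auto simp: D1_def D1_Cinf[unfolded D1_def])



fun dqN :: "(nat \<Rightarrow> real ^ 'N) \<Rightarrow> 'N \<Rightarrow> gen \<Rightarrow> (real ^ 'N) \<times> (real ^ 'N) \<Rightarrow> real" where
  "dqN \<alpha> k H (q, p) = p $ k"
| "dqN \<alpha> k Xm (q, p) = - q $ k"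
| "dqN \<alpha> k Xp (q, p) = 0"
| "dqN \<alpha> k (Ym i) (q, p) = - \<alpha> i $ k"
| "dqN \<alpha> k (Yp i) (q, p) = 0"
| "dqN \<alpha> k (Z i j) (q, p) = 0"

fun dpN :: "(nat \<Rightarrow> real ^ 'N) \<Rightarrow> 'N \<Rightarrow> gen \<Rightarrow> (real ^ 'N) \<times> (real ^ 'N) \<Rightarrow> real" where
  "dpN \<alpha> k H (q, p) = q $ k"
| "dpN \<alpha> k Xm (q, p) = 0"
| "dpN \<alpha> k Xp (q, p) = p $ k"
| "dpN \<alpha> k (Ym i) (q, p) = 0"
| "dpN \<alpha> k (Yp i) (q, p) = \<alpha> i $ k"
| "dpN \<alpha> k (Z i j) (q, p) = 0"

lemma vupd_eq: "vupd q k t = q + (t - q $ k) *\<^sub>R axis k 1"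
  by (simp add: vupd_def vec_eq_iff axis_def)

lemma vupd_triv: "vupd q k (q $ k) = q"
  by (simp add: vupd_def vec_eq_iff)

lemma dqN_D: "((\<lambda>t. realN \<alpha> b (vupd q k t, p)) has_real_derivative dqN \<alpha> k b (q, p)) (at (q $ k))"
  unfolding vupd_eq
  by (cases b) (auto intro!: derivative_eq_intros simp: inner_add_left inner_add_right inner_axis inner_axis' inner_commute)

lemma dpN_D: "((\<lambda>t. realN \<alpha> b (q, vupd p k t)) has_real_derivative dpN \<alpha> k b (q, p)) (at (p $ k))"
  unfolding vupd_eq
  by (cases b) (auto intro!: derivative_eq_intros simp: inner_add_left inner_add_right inner_axis inner_axis' inner_commute)

lemma structN:
  assumes "a \<in> basis n" "b \<in> basis n"
  shows "(\<Sum>k\<in>UNIV. dqN \<alpha> k a (q,p) * dpN \<alpha> k b (q,p) - dqN \<alpha> k b (q,p) * dpN \<alpha> k a (q,p))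
     = (\<Sum>c\<in>basis n. lie a b c * realN \<alpha> c (q,p))"
  unfolding lie_sum[OF assms]
  by (cases a; cases b) (auto simp: inner_vec_def sum_negf sum_subtractf sum.distrib sum_distrib_left algebra_simps min_def max_def)



definition DN :: "(nat \<Rightarrow> real ^ 'N) \<Rightarrow> ((gen \<Rightarrow> real) \<Rightarrow> real) \<Rightarrow> (real ^ 'N) \<times> (real ^ 'N) \<Rightarrow> real" where
  "DN \<alpha> f = (\<lambda>x. f (\<lambda>b. realN \<alpha> b x))"

lemma C_inf_realN: "C_inf (realN (\<alpha>::nat \<Rightarrow> real ^ 'N) b)"
proof -
  have f: "C_inf (\<lambda>x::(real^'N)\<times>(real^'N). fst x $ k)" "C_inf (\<lambda>x::(real^'N)\<times>(real^'N). snd x $ k)" for k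
    by (auto intro!: C_inf_linear bounded_linear_compose[OF bounded_linear_vec_nth] bounded_linear_fst bounded_linear_snd)
  have lin: "C_inf (\<lambda>x::(real^'N)\<times>(real^'N). \<Sum>k\<in>UNIV. c k * fst x $ k)"
    "C_inf (\<lambda>x::(real^'N)\<times>(real^'N). \<Sum>k\<in>UNIV. c k * snd x $ k)" for c
    by (auto intro!: C_inf_sum C_inf_mult C_inf_const f)
  show ?thesis
  proof (cases b)
    case H
    have "realN \<alpha> b = (\<lambda>x. \<Sum>k\<in>UNIV. fst x $ k * snd x $ k)" using H by (auto simp: fun_eq_iff inner_vec_def)
    then show ?thesis by (auto intro!: C_inf_sum C_inf_mult f)
  next
    case Xm
    have "realN \<alpha> b = (\<lambda>x. \<Sum>k\<in>UNIV. (-1/2) * (fst x $ k * fst x $ k))" using Xm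
      by (auto simp: fun_eq_iff inner_vec_def sum_divide_distrib sum_negf)
    then show ?thesis by (simp only:) (rule C_inf_sum, simp, rule C_inf_mult[OF C_inf_const C_inf_mult[OF f(1) f(1)]])
  next
    case Xp
    have "realN \<alpha> b = (\<lambda>x. \<Sum>k\<in>UNIV. (1/2) * (snd x $ k * snd x $ k))" using Xp
      by (auto simp: fun_eq_iff inner_vec_def sum_divide_distrib)
    then show ?thesis by (simp only:) (rule C_inf_sum, simp, rule C_inf_mult[OF C_inf_const C_inf_mult[OF f(2) f(2)]])
  next
    case (Ym i)
    have "realN \<alpha> b = (\<lambda>x. \<Sum>k\<in>UNIV. (- \<alpha> i $ k) * fst x $ k)" using Ym
      by (auto simp: fun_eq_iff inner_vec_def sum_negf)
    then show ?thesis using lin(1)[of "\<lambda>k. - \<alpha> i $ k"] by (simp only:)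
  next
    case (Yp i)
    have "realN \<alpha> b = (\<lambda>x. \<Sum>k\<in>UNIV. (\<alpha> i $ k) * snd x $ k)" using Yp
      by (auto simp: fun_eq_iff inner_vec_def)
    then show ?thesis using lin by simp
  next
    case (Z i j)
    then show ?thesis by (simp add: C_inf_const)
  qed
qed

lemma DN_Cinf: "f \<in> polyfun n \<Longrightarrow> C_inf (DN \<alpha> f)"
proof (induct f rule: polyfun.induct)
  case (const c) then show ?case by (simp add: DN_def C_inf_const)
next
  case (coord b)
  have "DN \<alpha> (\<lambda>\<xi>. \<xi> b) = realN \<alpha> b" by (simp add: DN_def fun_eq_iff)
  then show ?case by (simp add: C_inf_realN)
next
  case (add f g) then show ?case by (simp add: DN_def C_inf_add)
next
  case (mult f g) then show ?case by (simp add: DN_def C_inf_mult)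
qed

lemma DN_dq: "f \<in> polyfun n \<Longrightarrow> deriv (\<lambda>t. DN \<alpha> f (vupd q k t, p)) (q $ k) = (\<Sum>a\<in>basis n. gpartial a f (\<lambda>b. realN \<alpha> b (q,p)) * dqN \<alpha> k a (q,p))"
proof -
  assume f: "f \<in> polyfun n"
  have "((\<lambda>t. f (\<lambda>b. realN \<alpha> b (vupd q k t, p))) has_real_derivative (\<Sum>a\<in>basis n. gpartial a f (\<lambda>b. realN \<alpha> b (vupd q k (q $ k),p)) * dqN \<alpha> k a (q,p))) (at (q $ k))"
    using chain[OF f] dqN_D unfolding chainP_def
    by (elim allE[where x="\<lambda>t b. realN \<alpha> b (vupd q k t, p)"] allE[where x="q $ k"] allE[where x="\<lambda>b. dqN \<alpha> k b (q,p)"]) auto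
  then show ?thesis unfolding DN_def vupd_triv by (rule DERIV_imp_deriv)
qed

lemma DN_dp: "f \<in> polyfun n \<Longrightarrow> deriv (\<lambda>t. DN \<alpha> f (q, vupd p k t)) (p $ k) = (\<Sum>a\<in>basis n. gpartial a f (\<lambda>b. realN \<alpha> b (q,p)) * dpN \<alpha> k a (q,p))"
proof -
  assume f: "f \<in> polyfun n"
  have "((\<lambda>t. f (\<lambda>b. realN \<alpha> b (q, vupd p k t))) has_real_derivative (\<Sum>a\<in>basis n. gpartial a f (\<lambda>b. realN \<alpha> b (q, vupd p k (p $ k))) * dpN \<alpha> k a (q,p))) (at (p $ k))"
    using chain[OF f] dpN_D unfolding chainP_def
    by (elim allE[where x="\<lambda>t b. realN \<alpha> b (q, vupd p k t)"] allE[where x="p $ k"] allE[where x="\<lambda>b. dpN \<alpha> k b (q,p)"]) auto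
  then show ?thesis unfolding DN_def vupd_triv by (rule DERIV_imp_deriv)
qed

lemma partN: "LP_poisson_hom n can_bracketN (realN \<alpha>) (DN \<alpha>)"
  unfolding LP_poisson_hom_def
proof (intro conjI ballI allI)
  fix f g assume f: "f \<in> polyfun n" and g: "g \<in> polyfun n"
  show "DN \<alpha> (LP_bracket n f g) = can_bracketN (DN \<alpha> f) (DN \<alpha> g)"
  proof
    fix x :: "(real ^ 'a) \<times> (real ^ 'a)"
    obtain q p where x: "x = (q, p)" by (cases x)
    let ?\<xi> = "\<lambda>b. realN \<alpha> b (q,p)"
    have "can_bracketN (DN \<alpha> f) (DN \<alpha> g) x =
      (\<Sum>a\<in>basis n. \<Sum>b\<in>basis n. gpartial a f ?\<xi> * gpartial b g ?\<xi> *
         (\<Sum>k\<in>UNIV. dqN \<alpha> k a (q,p) * dpN \<alpha> k b (q,p) - dqN \<alpha> k b (q,p) * dpN \<alpha> k a (q,p)))"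
      unfolding x can_bracketN_def using f g by (simp add: DN_dq DN_dp bilN)
    also have "\<dots> = (\<Sum>a\<in>basis n. \<Sum>b\<in>basis n. \<Sum>c\<in>basis n.
        lie a b c * ?\<xi> c * gpartial a f ?\<xi> * gpartial b g ?\<xi>)"
    proof (intro sum.cong refl)
      fix a b assume a: "a \<in> basis n" and b: "b \<in> basis n"
      show "gpartial a f ?\<xi> * gpartial b g ?\<xi> *
         (\<Sum>k\<in>UNIV. dqN \<alpha> k a (q,p) * dpN \<alpha> k b (q,p) - dqN \<alpha> k b (q,p) * dpN \<alpha> k a (q,p)) =
        (\<Sum>c\<in>basis n. lie a b c * ?\<xi> c * gpartial a f ?\<xi> * gpartial b g ?\<xi>)"
        unfolding structN[OF a b] by (simp add: sum_distrib_left mult_ac)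
    qed
    also have "\<dots> = DN \<alpha> (LP_bracket n f g) x"
      by (simp add: x DN_def LP_bracket_def)
    finally show "DN \<alpha> (LP_bracket n f g) x = can_bracketN (DN \<alpha> f) (DN \<alpha> g) x" by simp
  qed
qed (auto simp: DN_def DN_Cinf[unfolded DN_def])

theorem proposition5p1:
  fixes n :: nat and \<alpha> :: "nat \<Rightarrow> real" and \<alpha>v :: "nat \<Rightarrow> real ^ 'N"
  assumes "n \<ge> 2"
  shows "(\<exists>D. LP_poisson_hom n can_bracket1 (real1 \<alpha>) D)
       \<and> (\<exists>D. LP_poisson_hom n can_bracketN (realN \<alpha>v) D)"
  using part1 partN by blast


end
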